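(* For every $\omega>0$, $l=B/\omega\in\mathbb N$ and $\mu=A/(2\omega)>0$ (with $c_0\neq0$ so that the ratio is defined), one has $$\Delta_0:=\beta^2(4\sigma+c_1^2)-4\le0,\qquad\text{where }\beta=-ib,\ \sigma=\frac{c_1}{c_0},$$ $b$ being the upper-right entry of the transition matrix $Q$ and $c_0,c_1$ the Stokes multipliers.
   Context: System (L): $u'=z^{-2}\big(-(lz+\mu(1+z^2))u+\frac{z}{2i\omega}v\big)$, $v'=\frac{1}{2i\omega z}u$. $F(z)=\operatorname{diag}(z^{-l}e^{\mu(1/z-z)},1)$; $S_\pm$ sectors with vertex $0$ containing the closed upper/lower half-plane minus $0$, closures avoiding $i\mathbb R_\mp$, $S_-=\overline{S_+}$; $H_\pm$ the unique invertible matrix functions holomorphic on $S_\pm$, $C^\infty$ on $\overline{S_\pm}\setminus\{\infty\}$, $H_\pm(0)=\mathrm{Id}$, transforming (L) into $\tilde u'=-z^{-2}(lz+\mu(1+z^2))\tilde u$, $\tilde v'=0$; $W_\pm=H_\pm F$ (branch on $S_-$ by counterclockwise continuation from $S_+$), $W_{+,1}=H_+F$ with branch continued counterclockwise from $S_-$. With $\Sigma_0\ni\mathbb R_-$, $\Sigma_1\ni\mathbb R_+$ the components of $S_+\cap S_-$: $W_-=W_+C_0$ on $\Sigma_0$, $W_{+,1}=W_-C_1$ on $\Sigma_1$, $C_0=\begin{pmatrix}1&c_0\\0&1\end{pmatrix}$, $C_1=\begin{pmatrix}1&0\\c_1&1\end{pmatrix}$. $M_N=\operatorname{diag}(e^{-2\pi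 il},1)$; $\mathbb I:(u,v)(z)\mapsto -iz^{-l}e^{\mu(1/z-z)}(-v(z^{-1}),u(z^{-1}))$; $\hat W_-=\mathbb I(W_+M_N)$ columnwise; $Q=\begin{pmatrix}-a&b\\-c&a\end{pmatrix}$ is the constant matrix with $W_+M_N=\hat W_-Q$ on $\Sigma_1$. *)

theory Defs
  imports "HOL-Analysis.Analysis"
begin

text \<open>2x2 complex matrices, row-major: mat2 a b c d = ((a,b),(c,d)).\<close>
definition mat2 :: "complex \<Rightarrow> complex \<Rightarrow> complex \<Rightarrow> complex \<Rightarrow> complex^2^2" where
  "mat2 a b c d = (\<chi> i j. if i = 1 then (if j = 1 then a else b) else (if j = 1 then c else d))"

text \<open>Coefficient matrix of system (L): (u,v)' = A(z) (u,v).\<close>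
definition coefL :: "real \<Rightarrow> nat \<Rightarrow> real \<Rightarrow> complex \<Rightarrow> complex^2^2" where
  "coefL \<omega> l \<mu> z = mat2 (- (of_nat l * z + of_real \<mu> * (1 + z\<^sup>2)) / z\<^sup>2) (1 / (2 * \<i> * of_real \<omega> * z))
                          (1 / (2 * \<i> * of_real \<omega> * z)) 0"

definition coefD :: "nat \<Rightarrow> real \<Rightarrow> complex \<Rightarrow> complex^2^2" where
  "coefD l \<mu> z = mat2 (- (of_nat l * z + of_real \<mu> * (1 + z\<^sup>2)) / z\<^sup>2) 0 0 0"

text \<open>The scalar z^(-l) e^(mu (1/z - z)); single valued since l is a natural number.\<close>
definition expf :: "nat \<Rightarrow> real \<Rightarrow> complex \<Rightarrow> complex" where
  "expf l \<mu> z = inverse (z ^ l) * exp (of_real \<mu> * (1 / z - z))"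

definition Fmat :: "nat \<Rightarrow> real \<Rightarrow> complex \<Rightarrow> complex^2^2" where
  "Fmat l \<mu> z = mat2 (expf l \<mu> z) 0 0 1"

definition monodromyN :: "nat \<Rightarrow> complex^2^2" where
  "monodromyN l = mat2 (exp (- 2 * of_real pi * \<i> * of_nat l)) 0 0 1"

definition is_sector :: "complex set \<Rightarrow> bool" where
  "is_sector S \<longleftrightarrow> (\<exists>\<alpha> \<beta>. \<alpha> < \<beta> \<and> \<beta> - \<alpha> \<le> 2 * pi \<and>
       S = {of_real r * cis t | r t. 0 < r \<and> \<alpha> < t \<and> t < \<beta>})"

definition admissible_Splus :: "complex set \<Rightarrow> bool" where
  "admissible_Splus S \<longleftrightarrow> is_sector S \<and> {z. Im z \<ge> 0 \<and> z \<noteq> 0} \<subseteq> S \<and>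
       closure S \<inter> {\<i> * of_real t | t. t < 0} = {}"

definition mderiv :: "(complex \<Rightarrow> complex^2^2) \<Rightarrow> complex \<Rightarrow> complex^2^2" where
  "mderiv H z = (\<chi> i j. deriv (\<lambda>w. H w $ i $ j) z)"

text \<open>H is a normalizing matrix function on the sector S:
  invertible and holomorphic on S, C^infinity on the closure of S (every derivative extends
  continuously to the closure), H(0) = Id, and the gauge transformation (u,v) = H (u~,v~)
  transforms (L) into the diagonal system, i.e. H' = A H - H D on S.\<close>
definition normalizing :: "real \<Rightarrow> nat \<Rightarrow> real \<Rightarrow> complex set \<Rightarrow> (complex \<Rightarrow> complex^2^2) \<Rightarrow> bool" where
  "normalizing \<omega> l \<mu> S H \<longleftrightarrow>
     (\<forall>i j. (\<lambda>z. H z $ i $ j) holomorphic_on S) \<and>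
     (\<forall>z\<in>S. invertible (H z)) \<and>
     continuous_on (closure S) H \<and>
     (\<forall>n i j. \<exists>g. continuous_on (closure S) g \<and>
                 (\<forall>z\<in>S. g z = (deriv ^^ n) (\<lambda>w. H w $ i $ j) z)) \<and>
     H 0 = mat 1 \<and>
     (\<forall>z\<in>S. mderiv H z = coefL \<omega> l \<mu> z ** H z - H z ** coefD l \<mu> z)"

text \<open>The involution I applied columnwise to a matrix solution W:
  column (u,v) is sent to z \<mapsto> -i z^-l e^(mu(1/z - z)) (-v(1/z), u(1/z)).\<close>
definition invI :: "nat \<Rightarrow> real \<Rightarrow> (complex \<Rightarrow> complex^2^2) \<Rightarrow> complex \<Rightarrow> complex^2^2" where
  "invI l \<mu> W z = (\<chi> i k. - \<i> * expf l \<mu> z *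
        (if i = 1 then - (W (1 / z) $ 2 $ k) else W (1 / z) $ 1 $ k))"

end

theory Submission
  imports Defs "HOL-Complex_Analysis.Complex_Analysis"
begin

no_notation fps_nth (infixl \<open>$\<close> 75)

lemma sector_open:
  assumes "is_sector S" shows "open S"
proof -
  obtain \<alpha> \<beta> where S: "S = {of_real r * cis t | r t. 0 < r \<and> \<alpha> < t \<and> t < \<beta>}"
    using assms unfolding is_sector_def by blast
  show ?thesis
  unfolding open_dist
  proof (intro ballI)
    fix z assume "z \<in> S"
    then obtain r t where z: "z = of_real r * cis t" "0 < r" "\<alpha> < t" "t < \<beta>" using S by blast
    define \<epsilon> where "\<epsilon> = min (t - \<alpha>) (\<beta> - t)"
    have ep: "\<epsilon> > 0" using z by (simp add: \<epsilon>_def)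
    have "continuous (at 1) Arg" by (rule continuous_at_Arg) (auto simp: complex_nonpos_Reals_iff)
    then obtain \<delta>0 where d0: "\<delta>0 > 0" "\<And>w. dist w 1 < \<delta>0 \<Longrightarrow> dist (Arg w) (Arg 1) < \<epsilon>"
      using ep unfolding continuous_at_eps_delta by blast
    define \<delta> where "\<delta> = min \<delta>0 1"
    have nz: "norm z = r" using z by (simp add: norm_mult)
    show "\<exists>e>0. \<forall>y. dist y z < e \<longrightarrow> y \<in> S"
    proof (intro exI[of _ "\<delta> * r"] conjI allI impI)
      show "\<delta> * r > 0" using d0 z by (simp add: \<delta>_def)
      fix y assume yd: "dist y z < \<delta> * r"
      define w where "w = y / z"
      have zn0: "z \<noteq> 0" using z by auto
      have "dist w 1 = norm (y - z) / norm z"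
      proof -
        have "y/z - 1 = (y - z)/z" using zn0 by (simp add: field_simps)
        thus ?thesis unfolding w_def dist_norm by (simp add: norm_divide)
      qed
      also have "\<dots> < \<delta>" using yd nz z(2) by (simp add: dist_norm divide_less_eq)
      finally have wd: "dist w 1 < \<delta>" .
      hence "dist w 1 < \<delta>0" "dist w 1 < 1" by (auto simp: \<delta>_def)
      hence aw: "\<bar>Arg w\<bar> < \<epsilon>" using d0(2) by (simp add: dist_real_def)
      have wn0: "w \<noteq> 0" using \<open>dist w 1 < 1\<close> by auto
      have "y = z * w" unfolding w_def using zn0 by simp
      also have "w = of_real (norm w) * cis (Arg w)"
        using Arg_eq[OF wn0] by (simp add: cis_conv_exp)
      finally have "y = of_real (r * norm w) * cis (t + Arg w)"
        using z by (simp add: cis_mult[symmetric] mult_ac)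
      moreover have "0 < r * norm w" using z wn0 by simp
      moreover have "\<alpha> < t + Arg w" "t + Arg w < \<beta>" using aw by (auto simp: \<epsilon>_def)
      ultimately show "y \<in> S" unfolding S by blast
    qed
  qed
qed

lemma sector_scale:
  assumes "is_sector S" "z \<in> S" "c > 0" shows "of_real c * z \<in> S"
proof -
  obtain \<alpha> \<beta> where S: "S = {of_real r * cis t | r t. 0 < r \<and> \<alpha> < t \<and> t < \<beta>}"
    using assms unfolding is_sector_def by blast
  then obtain r0 t0 where z: "z = of_real r0 * cis t0" "0 < r0" "\<alpha> < t0" "t0 < \<beta>" using assms by blast
  have "of_real c * z = of_real (c*r0) * cis t0" using z by simp
  moreover have "c * r0 > 0" using z assms by simp
  ultimately show ?thesis using S z by blast
qed

definition sol4 :: "(complex \<Rightarrow> complex) \<Rightarrow> (complex \<Rightarrow> complex) \<Rightarrow> (complex \<Rightarrow> complex) \<Rightarrow> (complex \<Rightarrow> complex)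
   \<Rightarrow> (complex \<Rightarrow> complex) \<Rightarrow> (complex \<Rightarrow> complex) \<Rightarrow> complex set \<Rightarrow> bool" where
  "sol4 d e h11 h12 h21 h22 V \<longleftrightarrow> (\<forall>z\<in>V.
     (h11 has_field_derivative e z * h21 z) (at z) \<and>
     (h12 has_field_derivative d z * h12 z + e z * h22 z) (at z) \<and>
     (h21 has_field_derivative e z * h11 z - d z * h21 z) (at z) \<and>
     (h22 has_field_derivative e z * h12 z) (at z))"

lemma zero_deriv_const:
  assumes "convex V" "\<And>z. z \<in> V \<Longrightarrow> (p has_field_derivative 0) (at z)"
  shows "\<exists>c. \<forall>z\<in>V. p z = (c::complex)"
  using assms by (intro has_field_derivative_zero_constant) (auto intro: has_field_derivative_at_within)

lemma const_lemma:
  assumes V: "convex V"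
    and H: "sol4 d e h11 h12 h21 h22 V" and G: "sol4 d e g11 g12 g21 g22 V"
    and f: "\<And>z. z \<in> V \<Longrightarrow> (f has_field_derivative d z * f z) (at z) \<and> f z \<noteq> 0"
  shows "\<exists>c. \<forall>z\<in>V. h22 z * g11 z - h12 z * g21 z = c"
    and "\<exists>c. \<forall>z\<in>V. h11 z * g22 z - h21 z * g12 z = c"
    and "\<exists>c. \<forall>z\<in>V. (h22 z * g12 z - h12 z * g22 z) / f z = c"
    and "\<exists>c. \<forall>z\<in>V. (h11 z * g21 z - h21 z * g11 z) * f z = c"
    and "\<exists>c. \<forall>z\<in>V. h11 z * h22 z - h12 z * h21 z = c"
proof -
  {
    fix z assume z: "z \<in> V"
    note h = H[unfolded sol4_def, rule_format, OF z] and g = G[unfolded sol4_def, rule_format, OF z]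
    note fz = f[OF z]
    have "((\<lambda>w. h22 w * g11 w - h12 w * g21 w) has_field_derivative 0) (at z)"
      by (rule DERIV_cong[OF DERIV_diff[OF DERIV_mult[of h22 _ z UNIV g11] DERIV_mult[of h12 _ z UNIV g21]]])
         (use h g in \<open>auto simp: algebra_simps\<close>)
    moreover have "((\<lambda>w. h11 w * g22 w - h21 w * g12 w) has_field_derivative 0) (at z)"
      by (rule DERIV_cong[OF DERIV_diff[OF DERIV_mult[of h11 _ z UNIV g22] DERIV_mult[of h21 _ z UNIV g12]]])
         (use h g in \<open>auto simp: algebra_simps\<close>)
    moreover have "((\<lambda>w. h11 w * h22 w - h12 w * h21 w) has_field_derivative 0) (at z)"
      by (rule DERIV_cong[OF DERIV_diff[OF DERIV_mult[of h11 _ z UNIV h22] DERIV_mult[of h12 _ z UNIV h21]]])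
         (use h g in \<open>auto simp: algebra_simps\<close>)
    moreover have "((\<lambda>w. (h22 w * g12 w - h12 w * g22 w) / f w) has_field_derivative 0) (at z)"
      by (rule DERIV_cong[OF DERIV_divide[OF DERIV_diff[OF DERIV_mult[of h22 _ z UNIV g12] DERIV_mult[of h12 _ z UNIV g22]]]])
         (use h g fz in \<open>auto simp: algebra_simps\<close>)
    moreover have "((\<lambda>w. (h11 w * g21 w - h21 w * g11 w) * f w) has_field_derivative 0) (at z)"
      by (rule DERIV_cong[OF DERIV_mult[OF DERIV_diff[OF DERIV_mult[of h11 _ z UNIV g21] DERIV_mult[of h21 _ z UNIV g11]]]])
         (use h g fz in \<open>auto simp: algebra_simps\<close>)
    ultimately have "((\<lambda>w. h22 w * g11 w - h12 w * g21 w) has_field_derivative 0) (at z)"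
       "((\<lambda>w. h11 w * g22 w - h21 w * g12 w) has_field_derivative 0) (at z)"
       "((\<lambda>w. h11 w * h22 w - h12 w * h21 w) has_field_derivative 0) (at z)"
       "((\<lambda>w. (h22 w * g12 w - h12 w * g22 w) / f w) has_field_derivative 0) (at z)"
       "((\<lambda>w. (h11 w * g21 w - h21 w * g11 w) * f w) has_field_derivative 0) (at z)" by blast+
  } note D = this
  show "\<exists>c. \<forall>z\<in>V. h22 z * g11 z - h12 z * g21 z = c"
    by (rule zero_deriv_const[OF V D(1)])
  show "\<exists>c. \<forall>z\<in>V. h11 z * g22 z - h21 z * g12 z = c"
    by (rule zero_deriv_const[OF V D(2)])
  show "\<exists>c. \<forall>z\<in>V. (h22 z * g12 z - h12 z * g22 z) / f z = c"
    by (rule zero_deriv_const[OF V D(4)])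
  show "\<exists>c. \<forall>z\<in>V. (h11 z * g21 z - h21 z * g11 z) * f z = c"
    by (rule zero_deriv_const[OF V D(5)])
  show "\<exists>c. \<forall>z\<in>V. h11 z * h22 z - h12 z * h21 z = c"
    by (rule zero_deriv_const[OF V D(3)])
qed

abbreviation I1 :: 2 where "I1 \<equiv> 1"
abbreviation I2 :: 2 where "I2 \<equiv> 2"

lemma mat2_nth[simp]:
  "mat2 a b c d $ 1 $ 1 = a" "mat2 a b c d $ 1 $ 2 = b"
  "mat2 a b c d $ 2 $ 1 = c" "mat2 a b c d $ 2 $ 2 = d"
  by (simp_all add: mat2_def)

lemma mat2_eta: "M = mat2 (M$1$1) (M$1$2) (M$2$1) (M$2$2)"
  unfolding mat2_def by (simp add: vec_eq_iff forall_2)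

lemma mat2_eq_iff: "mat2 a b c d = mat2 a' b' c' d' \<longleftrightarrow> a=a' \<and> b=b' \<and> c=c' \<and> d=d'"
  by (auto simp: vec_eq_iff forall_2)

lemma mat2_mult: "mat2 a b c d ** mat2 a' b' c' d' = mat2 (a*a'+b*c') (a*b'+b*d') (c*a'+d*c') (c*b'+d*d')"
  by (simp add: vec_eq_iff forall_2 matrix_matrix_mult_def sum_2)

lemma mat2_diff: "mat2 a b c d - mat2 a' b' c' d' = mat2 (a-a') (b-b') (c-c') (d-d')"
  by (simp add: vec_eq_iff forall_2)

definition dd :: "nat \<Rightarrow> real \<Rightarrow> complex \<Rightarrow> complex" where
  "dd l \<mu> z = - (of_nat l * z + of_real \<mu> * (1 + z\<^sup>2)) / z\<^sup>2"
definition ee :: "real \<Rightarrow> complex \<Rightarrow> complex" where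
  "ee \<omega> z = 1 / (2 * \<i> * of_real \<omega> * z)"

lemma coefL_mat2: "coefL \<omega> l \<mu> z = mat2 (dd l \<mu> z) (ee \<omega> z) (ee \<omega> z) 0"
  by (simp add: coefL_def dd_def ee_def)
lemma coefD_mat2: "coefD l \<mu> z = mat2 (dd l \<mu> z) 0 0 0"
  by (simp add: coefD_def dd_def)

lemma normalizing_sol:
  fixes H :: "complex \<Rightarrow> complex^2^2"
  assumes N: "normalizing \<omega> l \<mu> S H" and V: "open V" "V \<subseteq> S"
  shows "sol4 (dd l \<mu>) (ee \<omega>) (\<lambda>w. H w $ I1 $ I1) (\<lambda>w. H w $ I1 $ I2) (\<lambda>w. H w $ I2 $ I1) (\<lambda>w. H w $ I2 $ I2) V"
  unfolding sol4_def
proof (intro ballI)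
  fix z assume z: "z \<in> V"
  have zi: "z \<in> interior S" using V z interior_maximal by blast
  have zS: "z \<in> S" using z V by auto
  have der: "((\<lambda>w. H w $ i $ j) has_field_derivative deriv (\<lambda>w. H w $ i $ j) z) (at z)" for i j
  proof -
    have "(\<lambda>w. H w $ i $ j) holomorphic_on S" using N unfolding normalizing_def by blast
    hence "(\<lambda>w. H w $ i $ j) field_differentiable (at z within S)"
      using zS unfolding holomorphic_on_def by blast
    hence "(\<lambda>w. H w $ i $ j) field_differentiable (at z)"
      using at_within_interior[OF zi] by simp
    thus ?thesis by (simp add: DERIV_deriv_iff_field_differentiable)
  qed
  have "mderiv H z = coefL \<omega> l \<mu> z ** H z - H z ** coefD l \<mu> z"
    using N zS unfolding normalizing_def by blast
  also have "\<dots> = mat2 (ee \<omega> z * H z $ I2 $ I1) (dd l \<mu> z * H z $ I1 $ I2 + ee \<omega> z * H z $ I2 $ I2)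
          (ee \<omega> z * H z $ I1 $ I1 - dd l \<mu> z * H z $ I2 $ I1) (ee \<omega> z * H z $ I1 $ I2)"
    apply (subst (1 2) mat2_eta[of "H z"])
    by (simp add: coefL_mat2 coefD_mat2 mat2_mult mat2_diff mat2_eq_iff algebra_simps)
  finally have M: "mderiv H z = \<dots>" .
  have E: "deriv (\<lambda>w. H w $ i $ j) z = mderiv H z $ i $ j" for i j by (simp add: mderiv_def)
  show "((\<lambda>w. H w $ I1 $ I1) has_field_derivative ee \<omega> z * H z $ I2 $ I1) (at z) \<and>
     ((\<lambda>w. H w $ I1 $ I2) has_field_derivative dd l \<mu> z * H z $ I1 $ I2 + ee \<omega> z * H z $ I2 $ I2) (at z) \<and>
     ((\<lambda>w. H w $ I2 $ I1) has_field_derivative ee \<omega> z * H z $ I1 $ I1 - dd l \<mu> z * H z $ I2 $ I1) (at z) \<and>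
     ((\<lambda>w. H w $ I2 $ I2) has_field_derivative ee \<omega> z * H z $ I1 $ I2) (at z)"
  proof (intro conjI)
    show "((\<lambda>w. H w $ I1 $ I1) has_field_derivative ee \<omega> z * H z $ I2 $ I1) (at z)"
      by (rule DERIV_cong[OF der[of I1 I1]]) (simp only: E M mat2_nth)
    show "((\<lambda>w. H w $ I1 $ I2) has_field_derivative dd l \<mu> z * H z $ I1 $ I2 + ee \<omega> z * H z $ I2 $ I2) (at z)"
      by (rule DERIV_cong[OF der[of I1 I2]]) (simp only: E M mat2_nth)
    show "((\<lambda>w. H w $ I2 $ I1) has_field_derivative ee \<omega> z * H z $ I1 $ I1 - dd l \<mu> z * H z $ I2 $ I1) (at z)"
      by (rule DERIV_cong[OF der[of I2 I1]]) (simp only: E M mat2_nth)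
    show "((\<lambda>w. H w $ I2 $ I2) has_field_derivative ee \<omega> z * H z $ I1 $ I2) (at z)"
      by (rule DERIV_cong[OF der[of I2 I2]]) (simp only: E M mat2_nth)
  qed
qed

lemma sol4_cnj:
  assumes S: "sol4 d e h11 h12 h21 h22 W" and VW: "\<And>z. z \<in> V \<Longrightarrow> cnj z \<in> W"
    and dc: "\<And>z. cnj (d (cnj z)) = d z" and ec: "\<And>z. cnj (e (cnj z)) = - e z"
  shows "sol4 d e (\<lambda>z. cnj (h11 (cnj z))) (\<lambda>z. - cnj (h12 (cnj z))) (\<lambda>z. - cnj (h21 (cnj z))) (\<lambda>z. cnj (h22 (cnj z))) V"
  unfolding sol4_def
proof (intro ballI)
  fix z assume z: "z \<in> V"
  note h = S[unfolded sol4_def, rule_format, OF VW[OF z]]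
  have c: "((\<lambda>z. cnj (h (cnj z))) has_field_derivative cnj D) (at z)"
    if "(h has_field_derivative D) (at (cnj z))" for h D
    using has_field_derivative_cnj_cnj[OF that] by (simp add: o_def)
  have m: "((\<lambda>z. - cnj (h (cnj z))) has_field_derivative - cnj D) (at z)"
    if "(h has_field_derivative D) (at (cnj z))" for h D
    using DERIV_minus[OF c[OF that]] .
  have d1: "d (cnj z) = cnj (d z)" and e1: "e (cnj z) = - cnj (e z)"
    using dc[of z] ec[of z] by (metis complex_cnj_cnj, metis complex_cnj_cnj complex_cnj_minus)
  show "((\<lambda>z. cnj (h11 (cnj z))) has_field_derivative e z * - cnj (h21 (cnj z))) (at z) \<and>
     ((\<lambda>z. - cnj (h12 (cnj z))) has_field_derivative d z * - cnj (h12 (cnj z)) + e z * cnj (h22 (cnj z))) (at z) \<and>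
     ((\<lambda>z. - cnj (h21 (cnj z))) has_field_derivative e z * cnj (h11 (cnj z)) - d z * - cnj (h21 (cnj z))) (at z) \<and>
     ((\<lambda>z. cnj (h22 (cnj z))) has_field_derivative e z * - cnj (h12 (cnj z))) (at z)"
    apply (intro conjI)
       apply (rule DERIV_cong[OF c[OF conjunct1[OF h]]]; simp add: e1)
      apply (rule DERIV_cong[OF m[OF conjunct1[OF conjunct2[OF h]]]]; simp add: e1 d1)
     apply (rule DERIV_cong[OF m[OF conjunct1[OF conjunct2[OF conjunct2[OF h]]]]]; simp add: e1 d1)
    apply (rule DERIV_cong[OF c[OF conjunct2[OF conjunct2[OF conjunct2[OF h]]]]]; simp add: e1)
    done
qed

lemma dd_cnj: "cnj (dd l \<mu> (cnj z)) = dd l \<mu> z"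
  by (simp add: dd_def)
lemma ee_cnj: "cnj (ee \<omega> (cnj z)) = - ee \<omega> z"
  by (simp add: ee_def)

lemma expf_deriv:
  assumes z: "z \<noteq> 0"
  shows "(expf l \<mu> has_field_derivative dd l \<mu> z * expf l \<mu> z) (at z)"
proof -
  have e: "expf l \<mu> = (\<lambda>z. exp (of_real \<mu> * (1 / z - z)) / z ^ l)"
    by (simp add: expf_def fun_eq_iff divide_inverse mult.commute)
  have A: "((\<lambda>z. exp (of_real \<mu> * (1 / z - z))) has_field_derivative
      exp (of_real \<mu> * (1 / z - z)) * (of_real \<mu> * (- 1 / z^2 - 1))) (at z)"
    using z by (auto intro!: derivative_eq_intros simp: power2_eq_square field_simps)
  have B: "((\<lambda>z. z ^ l) has_field_derivative of_nat l * z ^ (l - 1)) (at z)"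
    using DERIV_power[OF DERIV_ident, where n=l and x=z and s=UNIV] by simp
  show ?thesis unfolding e
    apply (rule DERIV_cong[OF DERIV_divide[OF A B]])
     apply (simp add: z)
    apply (cases l)
     apply (simp_all add: z dd_def field_simps power2_eq_square)
    done
qed

lemma pow_le_exp:
  assumes "0 \<le> (x::real)" shows "x ^ n / fact n \<le> exp x"
proof -
  have s: "(\<lambda>i. x ^ i / fact i) sums exp x"
    using exp_converges[of x] by (simp add: divide_inverse mult.commute)
  have "x ^ n / fact n = (\<Sum>i\<in>{n}. x ^ i / fact i)" by simp
  also have "\<dots> \<le> (\<Sum>i. x ^ i / fact i)"
    by (rule sum_le_suminf) (use sums_summable[OF s] assms in auto)
  also have "\<dots> = exp x" using sums_unique[OF s] by simp
  finally show ?thesis .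
qed

lemma norm_expf: "norm (expf l \<mu> z) = exp (\<mu> * Re (1/z - z)) / norm z ^ l"
  by (simp add: expf_def norm_mult norm_inverse norm_power divide_inverse mult.commute)

lemma expf_nz: "z \<noteq> 0 \<Longrightarrow> expf l \<mu> z \<noteq> 0"
  by (simp add: expf_def)

lemma bound1:
  assumes t: "0 < t" "t \<le> 1/2" and mu: "\<mu> > 0"
  shows "exp (- \<mu>) \<le> norm (expf l \<mu> (Complex t (-t)))"
proof -
  have re0: "Re (1 / Complex t (-t)) = 1/(2*t)"
    using t by (simp add: Re_divide power2_eq_square field_simps)
  have re: "\<mu> * Re (1 / Complex t (-t) - Complex t (-t)) = \<mu> * (1/(2*t) - t)"
    using re0 by simp
  have nz: "norm (Complex t (-t)) \<le> 1"
  proof -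
    have "norm (Complex t (-t)) = sqrt (2 * t^2)" by (simp add: complex_norm)
    also have "\<dots> \<le> sqrt 1"
    proof (intro real_sqrt_le_mono)
      have "t*t \<le> (1/2)*(1/2)" using t by (intro mult_mono) auto
      thus "2 * t^2 \<le> 1" by (simp add: power2_eq_square)
    qed
    finally show ?thesis by simp
  qed
  have np: "norm (Complex t (-t)) ^ l \<le> 1" using nz by (simp add: power_le_one)
  have "Complex t (-t) \<noteq> 0" using t by (simp add: complex_eq_iff)
  hence npos: "norm (Complex t (-t)) ^ l > 0" by simp
  have "exp (- \<mu>) \<le> exp (\<mu> * (1/(2*t) - t))"
  proof (intro exp_le_cancel_iff[THEN iffD2])
    have h1: "\<mu> * t \<le> \<mu>" using t mu by (intro mult_left_le) auto
    have h2: "0 \<le> \<mu> * (1/(2*t))" using t mu by simp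
    show "- \<mu> \<le> \<mu> * (1/(2*t) - t)" unfolding right_diff_distrib using h1 h2 by linarith
  qed
  also have "\<dots> \<le> exp (\<mu> * (1/(2*t) - t)) / norm (Complex t (-t)) ^ l"
    using np npos by (simp add: le_divide_eq)
  finally show ?thesis unfolding norm_expf re .
qed

lemma bound2:
  assumes t: "0 < t" "t \<le> 1" and mu: "\<mu> > 0"
  shows "norm (expf l \<mu> (Complex (-t) (-t))) \<le> exp \<mu> * fact l * (2/\<mu>)^l"
proof -
  have re0: "Re (1 / Complex (-t) (-t)) = - 1/(2*t)"
    using t by (simp add: Re_divide power2_eq_square field_simps)
  have re: "\<mu> * Re (1 / Complex (-t) (-t) - Complex (-t) (-t)) = \<mu> * (t - 1/(2*t))"
    using re0 by simp
  have nz: "t \<le> norm (Complex (-t) (-t))"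
    using abs_Re_le_cmod[of "Complex (-t) (-t)"] t by simp
  have x: "(\<mu>/(2*t)) ^ l / fact l \<le> exp (\<mu>/(2*t))" using t mu by (intro pow_le_exp) simp
  have e1: "exp (\<mu> * (t - 1/(2*t))) = exp (\<mu>*t) / exp (\<mu>/(2*t))"
    by (simp add: exp_diff[symmetric] right_diff_distrib)
  have "exp (\<mu>*t) \<le> exp \<mu>" using t mu by simp
  have A: "1 / exp (\<mu>/(2*t)) \<le> fact l / (\<mu>/(2*t)) ^ l"
    using x t mu by (simp add: field_simps)
  have "norm (expf l \<mu> (Complex (-t) (-t))) = exp (\<mu>*t) * (1 / exp (\<mu>/(2*t))) / norm (Complex (-t) (-t)) ^ l"
    unfolding norm_expf re e1 by simp
  also have "\<dots> \<le> exp \<mu> * (fact l / (\<mu>/(2*t)) ^ l) / t ^ l"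
  proof (rule frac_le)
    have "exp (\<mu>*t) * (1 / exp (\<mu>/(2*t))) \<le> exp \<mu> * (fact l / (\<mu>/(2*t)) ^ l)"
      by (rule mult_mono[OF \<open>exp (\<mu>*t) \<le> exp \<mu>\<close> A]) auto
    thus "exp (\<mu>*t) * (1 / exp (\<mu>/(2*t))) \<le> exp \<mu> * (fact l / (\<mu>/(2*t)) ^ l)" .
    show "0 \<le> exp \<mu> * (fact l / (\<mu>/(2*t)) ^ l)" using t mu by simp
    show "0 < t ^ l" using t by simp
    show "t ^ l \<le> norm (Complex (-t) (-t)) ^ l" using nz t by (intro power_mono) auto
  qed
  also have "\<dots> = exp \<mu> * fact l * (2/\<mu>)^l"
    using t mu by (simp add: power_divide field_simps power_mult_distrib)
  finally show ?thesis .
qed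

lemma mat1_nth[simp]: "(mat 1 :: complex^2^2) $ I1 $ I1 = 1" "(mat 1 :: complex^2^2) $ I1 $ I2 = 0"
  "(mat 1 :: complex^2^2) $ I2 $ I1 = 0" "(mat 1 :: complex^2^2) $ I2 $ I2 = 1"
  by (simp_all add: mat_def)

lemma J_unique:
  fixes Hp Hm :: "complex \<Rightarrow> complex^2^2"
  assumes mu: "\<mu> > 0"
    and Np: "normalizing \<omega> l \<mu> Sp Hp" and Nm: "normalizing \<omega> l \<mu> Sm Hm"
    and Up: "{z. Im z > 0} \<subseteq> Sp" and Lm: "{z. Im z < 0} \<subseteq> Sm"
  shows "Hm 1 $ I1 $ I1 = cnj (Hp 1 $ I1 $ I1)" "Hm 1 $ I1 $ I2 = - cnj (Hp 1 $ I1 $ I2)"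
        "Hm 1 $ I2 $ I1 = - cnj (Hp 1 $ I2 $ I1)" "Hm 1 $ I2 $ I2 = cnj (Hp 1 $ I2 $ I2)"
proof -
  define L where "L = {z. Im z < 0}"
  define U where "U = {z::complex. Im z > 0}"
  have oL: "open L" and cL: "convex L" unfolding L_def
    by (auto intro: open_halfspace_Im_lt convex_halfspace_Im_lt)
  have oU: "open U" unfolding U_def by (rule open_halfspace_Im_gt)
  define h11 where "h11 = (\<lambda>z. Hm z $ I1 $ I1)"
  define h12 where "h12 = (\<lambda>z. Hm z $ I1 $ I2)"
  define h21 where "h21 = (\<lambda>z. Hm z $ I2 $ I1)"
  define h22 where "h22 = (\<lambda>z. Hm z $ I2 $ I2)"
  define g11 where "g11 = (\<lambda>z. cnj (Hp (cnj z) $ I1 $ I1))"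
  define g12 where "g12 = (\<lambda>z. - cnj (Hp (cnj z) $ I1 $ I2))"
  define g21 where "g21 = (\<lambda>z. - cnj (Hp (cnj z) $ I2 $ I1))"
  define g22 where "g22 = (\<lambda>z. cnj (Hp (cnj z) $ I2 $ I2))"
  define f where "f = expf l \<mu>"
  have sH: "sol4 (dd l \<mu>) (ee \<omega>) h11 h12 h21 h22 L"
    unfolding h11_def h12_def h21_def h22_def
    by (rule normalizing_sol[OF Nm oL]) (use Lm in \<open>auto simp: L_def\<close>)
  have sP: "sol4 (dd l \<mu>) (ee \<omega>) (\<lambda>w. Hp w $ I1 $ I1) (\<lambda>w. Hp w $ I1 $ I2) (\<lambda>w. Hp w $ I2 $ I1) (\<lambda>w. Hp w $ I2 $ I2) U"
    by (rule normalizing_sol[OF Np oU]) (use Up in \<open>auto simp: U_def\<close>)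
  have sG: "sol4 (dd l \<mu>) (ee \<omega>) g11 g12 g21 g22 L"
    unfolding g11_def g12_def g21_def g22_def
    by (rule sol4_cnj[OF sP]) (auto simp: L_def U_def dd_cnj ee_cnj)
  have fL: "\<And>z. z \<in> L \<Longrightarrow> (f has_field_derivative dd l \<mu> z * f z) (at z) \<and> f z \<noteq> 0"
  proof -
    fix z assume "z \<in> L" hence z0: "z \<noteq> 0" by (auto simp: L_def)
    show "(f has_field_derivative dd l \<mu> z * f z) (at z) \<and> f z \<noteq> 0"
      unfolding f_def using expf_deriv[OF z0] expf_nz[OF z0] by blast
  qed
  note C = const_lemma[OF cL sH sG fL]
  obtain c11 where c11: "\<forall>z\<in>L. h22 z * g11 z - h12 z * g21 z = c11" using C(1) by blast
  obtain c22 where c22: "\<forall>z\<in>L. h11 z * g22 z - h21 z * g12 z = c22" using C(2) by blast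
  obtain k12 where k12: "\<forall>z\<in>L. (h22 z * g12 z - h12 z * g22 z) / f z = k12" using C(3) by blast
  obtain k21 where k21: "\<forall>z\<in>L. (h11 z * g21 z - h21 z * g11 z) * f z = k21" using C(4) by blast
  obtain cd where cd: "\<forall>z\<in>L. h11 z * h22 z - h12 z * h21 z = cd" using C(5) by blast

  have clSm: "closure L \<subseteq> closure Sm" using Lm by (intro closure_mono) (auto simp: L_def)
  have cHm: "continuous_on (closure L) Hm"
    using Nm clSm unfolding normalizing_def by (meson continuous_on_subset)
  have cnjL: "cnj ` closure L \<subseteq> closure Sp"
  proof (rule image_closure_subset)
    show "continuous_on (closure L) cnj" by (intro continuous_intros)
    show "closed (closure Sp)" by simp
    show "cnj ` L \<subseteq> closure Sp" using Up closure_subset by (fastforce simp: L_def)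
  qed
  have cHp: "continuous_on (closure L) (\<lambda>z. Hp (cnj z))"
    using Np cnjL unfolding normalizing_def
    by (intro continuous_on_compose2[of "closure Sp" Hp "closure L" cnj]) (auto intro: continuous_intros)
  have ch: "continuous_on (closure L) h11" "continuous_on (closure L) h12"
     "continuous_on (closure L) h21" "continuous_on (closure L) h22"
    unfolding h11_def h12_def h21_def h22_def using cHm by (auto intro!: continuous_intros)
  have cg: "continuous_on (closure L) g11" "continuous_on (closure L) g12"
     "continuous_on (closure L) g21" "continuous_on (closure L) g22"
    unfolding g11_def g12_def g21_def g22_def using cHp by (auto intro!: continuous_intros)
  have H0: "Hm 0 = mat 1" "Hp 0 = mat 1" using Nm Np unfolding normalizing_def by auto
  have v0: "h11 0 = 1" "h12 0 = 0" "h21 0 = 0" "h22 0 = 1" "g11 0 = 1" "g12 0 = 0" "g21 0 = 0" "g22 0 = 1"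
    by (simp_all add: h11_def h12_def h21_def h22_def g11_def g12_def g21_def g22_def H0)
  have in0: "0 \<in> closure L" unfolding closure_approachable
  proof (intro allI impI)
    fix e :: real assume e: "e > 0"
    show "\<exists>y\<in>L. dist y 0 < e"
      by (rule bexI[of _ "Complex 0 (-e/2)"]) (use e in \<open>auto simp: L_def dist_norm complex_norm\<close>)
  qed
  have in1: "1 \<in> closure L" unfolding closure_approachable
  proof (intro allI impI)
    fix e :: real assume e: "e > 0"
    show "\<exists>y\<in>L. dist y 1 < e"
    proof (rule bexI[of _ "Complex 1 (-e/2)"])
      have "Complex 1 (-e/2) - 1 = Complex 0 (-e/2)" by (simp add: complex_eq_iff)
      thus "dist (Complex 1 (-e/2)) 1 < e" using e by (simp add: dist_norm complex_norm)
    qed (use e in \<open>auto simp: L_def\<close>)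
  qed
  have "c11 = 1"
    proof -
    have "continuous_on (closure L) (\<lambda>z. h22 z * g11 z - h12 z * g21 z)" using ch cg by (intro continuous_intros)
    hence "(\<lambda>z. h22 z * g11 z - h12 z * g21 z) 0 = c11" by (rule continuous_constant_on_closure) (use c11 in0 in auto)
    thus ?thesis by (simp add: v0)
  qed
  have "c22 = 1"
    proof -
    have "continuous_on (closure L) (\<lambda>z. h11 z * g22 z - h21 z * g12 z)" using ch cg by (intro continuous_intros)
    hence "(\<lambda>z. h11 z * g22 z - h21 z * g12 z) 0 = c22" by (rule continuous_constant_on_closure) (use c22 in0 in auto)
    thus ?thesis by (simp add: v0)
  qed
  have "cd = 1"
    proof -
    have "continuous_on (closure L) (\<lambda>z. h11 z * h22 z - h12 z * h21 z)" using ch cg by (intro continuous_intros)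
    hence "(\<lambda>z. h11 z * h22 z - h12 z * h21 z) 0 = cd" by (rule continuous_constant_on_closure) (use cd in0 in auto)
    thus ?thesis by (simp add: v0)
  qed
  have "k12 = 0"
  proof (rule ccontr)
    assume nk: "k12 \<noteq> 0"
    define N where "N = (\<lambda>z. h22 z * g12 z - h12 z * g22 z)"
    have cN: "continuous_on (closure L) N" unfolding N_def using ch cg by (auto intro!: continuous_intros)
    have N0: "N 0 = 0" by (simp add: N_def v0)
    have ep: "norm k12 * exp (- \<mu>) > 0" using nk by simp
    obtain d where d: "d > 0" "\<forall>x'\<in>closure L. dist x' 0 < d \<longrightarrow> dist (N x') (N 0) < norm k12 * exp (- \<mu>)"
      using cN in0 ep unfolding continuous_on_iff by blast
    define t where "t = min (1/2) (d/3)"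
    have t: "0 < t" "t \<le> 1/2" "t \<le> d/3" using d by (auto simp: t_def)
    define z where "z = Complex t (-t)"
    have zL: "z \<in> L" using t by (simp add: z_def L_def)
    have "dist z 0 \<le> \<bar>Re z\<bar> + \<bar>Im z\<bar>" using cmod_le[of z] by simp
    also have "\<dots> < d" using t d by (simp add: z_def)
    finally have "dist (N z) (N 0) < norm k12 * exp (- \<mu>)" using d zL closure_subset by blast
    hence Nz: "norm (N z) < norm k12 * exp (- \<mu>)" by (simp add: N0)
    have fz: "f z \<noteq> 0" using fL zL by blast
    have "N z = k12 * f z" using k12 zL fz by (auto simp: N_def field_simps)
    hence "norm (N z) = norm k12 * norm (f z)" by (simp add: norm_mult)
    moreover have "exp (- \<mu>) \<le> norm (f z)" unfolding f_def z_def by (rule bound1[OF t(1,2) mu])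
    ultimately have "norm k12 * exp (- \<mu>) \<le> norm (N z)" using nk by simp
    thus False using Nz by simp
  qed
  have "k21 = 0"
  proof (rule ccontr)
    assume nk: "k21 \<noteq> 0"
    define N where "N = (\<lambda>z. h11 z * g21 z - h21 z * g11 z)"
    define B where "B = exp \<mu> * fact l * (2/\<mu>)^l"
    have Bp: "B > 0" using mu by (simp add: B_def)
    have cN: "continuous_on (closure L) N" unfolding N_def using ch cg by (auto intro!: continuous_intros)
    have N0: "N 0 = 0" by (simp add: N_def v0)
    have ep: "norm k21 / B > 0" using nk Bp by simp
    obtain d where d: "d > 0" "\<forall>x'\<in>closure L. dist x' 0 < d \<longrightarrow> dist (N x') (N 0) < norm k21 / B"
      using cN in0 ep unfolding continuous_on_iff by blast
    define t where "t = min 1 (d/3)"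
    have t: "0 < t" "t \<le> 1" "t \<le> d/3" using d by (auto simp: t_def)
    define z where "z = Complex (-t) (-t)"
    have zL: "z \<in> L" using t by (simp add: z_def L_def)
    have "dist z 0 \<le> \<bar>Re z\<bar> + \<bar>Im z\<bar>" using cmod_le[of z] by simp
    also have "\<dots> < d" using t d by (simp add: z_def)
    finally have "dist (N z) (N 0) < norm k21 / B" using d zL closure_subset by blast
    hence Nz: "norm (N z) < norm k21 / B" by (simp add: N0)
    have "N z * f z = k21" using k21 zL by (auto simp: N_def)
    hence "norm k21 = norm (N z) * norm (f z)" by (auto simp: norm_mult)
    also have "\<dots> \<le> norm (N z) * B"
      unfolding f_def z_def B_def by (intro mult_left_mono bound2[OF t(1,2) mu]) simp
    also have "\<dots> < norm k21 / B * B" using Nz Bp by (intro mult_strict_right_mono) auto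
    also have "\<dots> = norm k21" using Bp by simp
    finally show False by simp
  qed
  have eqs: "\<forall>z\<in>L. g11 z = h11 z \<and> g12 z = h12 z \<and> g21 z = h21 z \<and> g22 z = h22 z"
  proof
    fix z assume zL: "z \<in> L"
    have e1: "h22 z * g11 z - h12 z * g21 z = 1" using c11 zL \<open>c11 = 1\<close> by blast
    have e2: "h11 z * g22 z - h21 z * g12 z = 1" using c22 zL \<open>c22 = 1\<close> by blast
    have fz: "f z \<noteq> 0" using fL zL by blast
    have e3: "h22 z * g12 z - h12 z * g22 z = 0" using k12 zL \<open>k12 = 0\<close> fz by auto
    have e4: "h11 z * g21 z - h21 z * g11 z = 0" using k21 zL \<open>k21 = 0\<close> fz by auto
    have e5: "h11 z * h22 z - h12 z * h21 z = 1" using cd zL \<open>cd = 1\<close> by blast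
    have "g11 z = (h11 z * h22 z - h12 z * h21 z) * g11 z" using e5 by simp
    also have "\<dots> = h11 z * (h22 z * g11 z - h12 z * g21 z) + h12 z * (h11 z * g21 z - h21 z * g11 z)"
      by (simp add: algebra_simps)
    finally have a1: "g11 z = h11 z" using e1 e4 by simp
    have "g21 z = (h11 z * h22 z - h12 z * h21 z) * g21 z" using e5 by simp
    also have "\<dots> = h21 z * (h22 z * g11 z - h12 z * g21 z) + h22 z * (h11 z * g21 z - h21 z * g11 z)"
      by (simp add: algebra_simps)
    finally have a2: "g21 z = h21 z" using e1 e4 by simp
    have "g12 z = (h11 z * h22 z - h12 z * h21 z) * g12 z" using e5 by simp
    also have "\<dots> = h11 z * (h22 z * g12 z - h12 z * g22 z) + h12 z * (h11 z * g22 z - h21 z * g12 z)"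
      by (simp add: algebra_simps)
    finally have a3: "g12 z = h12 z" using e2 e3 by simp
    have "g22 z = (h11 z * h22 z - h12 z * h21 z) * g22 z" using e5 by simp
    also have "\<dots> = h21 z * (h22 z * g12 z - h12 z * g22 z) + h22 z * (h11 z * g22 z - h21 z * g12 z)"
      by (simp add: algebra_simps)
    finally have a4: "g22 z = h22 z" using e2 e3 by simp
    show "g11 z = h11 z \<and> g12 z = h12 z \<and> g21 z = h21 z \<and> g22 z = h22 z" using a1 a2 a3 a4 by blast
  qed
  have "g11 1 - h11 1 = 0"
    proof -
    have "continuous_on (closure L) (\<lambda>z. g11 z - h11 z)" using ch cg by (intro continuous_intros)
    hence "(\<lambda>z. g11 z - h11 z) 1 = 0" by (rule continuous_constant_on_closure) (use eqs in1 in auto)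
    thus ?thesis by (simp add: v0)
  qed
  moreover have "g12 1 - h12 1 = 0"
    proof -
    have "continuous_on (closure L) (\<lambda>z. g12 z - h12 z)" using ch cg by (intro continuous_intros)
    hence "(\<lambda>z. g12 z - h12 z) 1 = 0" by (rule continuous_constant_on_closure) (use eqs in1 in auto)
    thus ?thesis by (simp add: v0)
  qed
  moreover have "g21 1 - h21 1 = 0"
    proof -
    have "continuous_on (closure L) (\<lambda>z. g21 z - h21 z)" using ch cg by (intro continuous_intros)
    hence "(\<lambda>z. g21 z - h21 z) 1 = 0" by (rule continuous_constant_on_closure) (use eqs in1 in auto)
    thus ?thesis by (simp add: v0)
  qed
  moreover have "g22 1 - h22 1 = 0"
    proof -
    have "continuous_on (closure L) (\<lambda>z. g22 z - h22 z)" using ch cg by (intro continuous_intros)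
    hence "(\<lambda>z. g22 z - h22 z) 1 = 0" by (rule continuous_constant_on_closure) (use eqs in1 in auto)
    thus ?thesis by (simp add: v0)
  qed
  ultimately show "Hm 1 $ I1 $ I1 = cnj (Hp 1 $ I1 $ I1)" "Hm 1 $ I1 $ I2 = - cnj (Hp 1 $ I1 $ I2)"
        "Hm 1 $ I2 $ I1 = - cnj (Hp 1 $ I2 $ I1)" "Hm 1 $ I2 $ I2 = cnj (Hp 1 $ I2 $ I2)"
    by (simp_all add: h11_def h12_def h21_def h22_def g11_def g12_def g21_def g22_def)
qed

lemma trace0:
  fixes x1 x2 x3 x4 m1 m2 m3 m4 s :: complex
  assumes "x1*m1 + x2*m3 = s*\<i>*x3" "x1*m2 + x2*m4 = s*\<i>*x4"
    "x3*m1 + x4*m3 = -s*\<i>*x1" "x3*m2 + x4*m4 = -s*\<i>*x2" "x1*x4 - x2*x3 \<noteq> 0"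
  shows "m1 + m4 = 0"
proof -
  have "(x1*x4 - x2*x3) * (m1 + m4) = x4*(x1*m1 + x2*m3) - x2*(x3*m1 + x4*m3) - x3*(x1*m2 + x2*m4) + x1*(x3*m2 + x4*m4)"
    by (simp add: algebra_simps)
  also have "\<dots> = 0" unfolding assms(1-4) by (simp add: algebra_simps)
  finally show ?thesis using assms(5) by simp
qed

lemma final_alg:
  fixes a b c c0 c1 :: complex
  assumes det: "a^2 - b*c = 1" and tr: "- c0*c1*a - c0*c + c1*b = 0" and re: "c1*b + a = cnj a"
    and c0: "c0 \<noteq> 0"
  shows "let \<beta> = - \<i> * b; \<sigma> = c1 / c0; \<Delta>0 = \<beta>\<^sup>2 * (4 * \<sigma> + c1\<^sup>2) - 4
         in Im \<Delta>0 = 0 \<and> Re \<Delta>0 \<le> 0"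
proof -
  have cc: "c = (c1*b - c0*c1*a)/c0" using tr c0 by (simp add: field_simps)
  have s1: "(- \<i> * b)\<^sup>2 * (4 * (c1/c0) + c1\<^sup>2) - 4 = - 4 * (b*c1*b/c0) - b^2*c1 ^ 2 - 4"
    by (simp add: power2_eq_square field_simps)
  have s2: "b*c1*b/c0 = b*c + c1*a*b" using c0 unfolding cc by (simp add: field_simps)
  have s3: "b*c = a^2 - 1" using det by (simp add: algebra_simps)
  have s4: "(- 4) * (a^2 - 1 + c1 * a * b) - b^2 * c1 ^ 2 - 4 = - ((2*a + c1*b)^2)"
    by (simp add: power2_eq_square algebra_simps)
  have s5: "2*a + c1*b = of_real (2 * Re a)"
  proof -
    have "2*a + c1*b = a + (c1*b + a)" by (simp add: algebra_simps)
    also have "\<dots> = a + cnj a" using re by simp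
    also have "\<dots> = of_real (2 * Re a)" by (rule complex_add_cnj)
    finally show ?thesis .
  qed
  have "(- \<i> * b)\<^sup>2 * (4 * (c1/c0) + c1\<^sup>2) - 4 = - 4 * (b*c1*b/c0) - b^2*c1 ^ 2 - 4" by (rule s1)
  also have "\<dots> = (- 4) * (a^2 - 1 + c1 * a * b) - b^2 * c1 ^ 2 - 4" using s2 s3 by simp
  also have "\<dots> = - ((2*a + c1*b)^2)" by (rule s4)
  also have "\<dots> = - ((of_real (2 * Re a))^2)" using s5 by simp
  finally have "(- \<i> * b)\<^sup>2 * (4 * (c1/c0) + c1\<^sup>2) - 4 = - ((of_real (2 * Re a))^2)" .
  then have D: "(- \<i> * b)\<^sup>2 * (4 * (c1/c0) + c1\<^sup>2) - 4 = - of_real ((2 * Re a)^2)" by simp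
  show ?thesis unfolding Let_def D by simp
qed

definition hmat :: "complex set \<Rightarrow> (complex \<Rightarrow> complex^2^2) \<Rightarrow> bool" where
  "hmat T A \<longleftrightarrow> (\<forall>i j. (\<lambda>z. A z $ i $ j) holomorphic_on T)"

lemma mmult_nth: "((A::complex^2^2) ** B) $ i $ j = A $ i $ I1 * B $ I1 $ j + A $ i $ I2 * B $ I2 $ j"
  by (simp add: matrix_matrix_mult_def sum_2)

lemma hmat_mult: "hmat T A \<Longrightarrow> hmat T B \<Longrightarrow> hmat T (\<lambda>z. A z ** B z)"
  unfolding hmat_def mmult_nth by (auto intro!: holomorphic_intros)

lemma hmat_const: "hmat T (\<lambda>z. M)"
  unfolding hmat_def by auto

lemma expf_holo: "0 \<notin> T \<Longrightarrow> expf l \<mu> holomorphic_on T"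
proof -
  assume T: "0 \<notin> T"
  have e: "expf l \<mu> = (\<lambda>z. inverse (z ^ l) * exp (of_real \<mu> * (1 / z - z)))"
    by (simp add: expf_def fun_eq_iff)
  show ?thesis unfolding e using T by (auto intro!: holomorphic_intros)
qed

lemma hmat_Fmat: "0 \<notin> T \<Longrightarrow> hmat T (\<lambda>z. Fmat l \<mu> z)"
  unfolding hmat_def Fmat_def
  by (auto simp: forall_2 intro: expf_holo)

lemma hmat_sub: "normalizing \<omega> l \<mu> S H \<Longrightarrow> T \<subseteq> S \<Longrightarrow> hmat T H"
  unfolding hmat_def normalizing_def by (auto intro: holomorphic_on_subset)

lemma hmat_invI:
  assumes W: "hmat S W" and TS: "\<And>z. z \<in> T \<Longrightarrow> 1 / z \<in> S" and T0: "0 \<notin> T"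
  shows "hmat T (invI l \<mu> W)"
  unfolding hmat_def
proof (intro allI)
  fix i j :: 2
  have c: "(\<lambda>z. W (1/z) $ k $ j) holomorphic_on T" for k
  proof -
    have "((\<lambda>w. W w $ k $ j) \<circ> (\<lambda>z. 1/z)) holomorphic_on T"
      by (rule holomorphic_on_compose_gen[of _ T _ S])
         (use W TS T0 in \<open>auto simp: hmat_def intro!: holomorphic_intros\<close>)
    thus ?thesis by (simp add: o_def)
  qed
  have e: "expf l \<mu> holomorphic_on T" using expf_holo[OF T0] .
  show "(\<lambda>z. invI l \<mu> W z $ i $ j) holomorphic_on T"
    unfolding invI_def using c e
    by (cases "i = 1") (auto intro!: holomorphic_intros)
qed

lemma cancel_left:
  fixes X A B :: "complex^2^2"
  assumes "det X \<noteq> 0" "X ** A = X ** B" shows "A = B"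
proof -
  have "invertible X" using assms(1) by (simp add: invertible_det_nz)
  then obtain X' where X': "X' ** X = mat 1" unfolding invertible_def by blast
  have "A = (X' ** X) ** A" by (simp add: X')
  also have "\<dots> = X' ** (X ** B)" by (simp add: matrix_mul_assoc[symmetric] assms(2))
  also have "\<dots> = B" by (simp add: matrix_mul_assoc X')
  finally show ?thesis .
qed

lemma mat2_det: "det (mat2 a b c d) = a*d - b*c"
  by (simp add: det_2)

lemma mat2_one: "mat 1 = mat2 1 0 0 1"
  by (simp add: vec_eq_iff forall_2 mat_def)

theorem mainTheorem16:
  fixes \<omega> \<mu> :: real and l :: nat
    and Sp Sm :: "complex set"
    and Hp Hm :: "complex \<Rightarrow> complex^2^2"
    and c0 c1 a b c :: complex
  assumes "\<omega> > 0" and "\<mu> > 0"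
    and "admissible_Splus Sp" and "Sm = cnj ` Sp"
    and "normalizing \<omega> l \<mu> Sp Hp" and "normalizing \<omega> l \<mu> Sm Hm"
    and "\<forall>z \<in> connected_component_set (Sp \<inter> Sm) (-1).
           Hm z ** Fmat l \<mu> z = (Hp z ** Fmat l \<mu> z) ** mat2 1 c0 0 1"
    and "\<forall>z \<in> connected_component_set (Sp \<inter> Sm) 1.
           Hp z ** Fmat l \<mu> z = (Hm z ** Fmat l \<mu> z) ** mat2 1 0 c1 1"
    and "\<forall>z \<in> connected_component_set (Sp \<inter> Sm) 1.
           (Hp z ** Fmat l \<mu> z) ** monodromyN l
             = invI l \<mu> (\<lambda>w. (Hp w ** Fmat l \<mu> w) ** monodromyN l) z ** mat2 (- a) b (- c) a"
    and "c0 \<noteq> 0"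
  shows "let \<beta> = - \<i> * b; \<sigma> = c1 / c0; \<Delta>0 = \<beta>\<^sup>2 * (4 * \<sigma> + c1\<^sup>2) - 4
         in Im \<Delta>0 = 0 \<and> Re \<Delta>0 \<le> 0"
proof -
  note mu = assms(2) and Np = assms(5) and Nm = assms(6)
  have sec: "is_sector Sp" and UH: "{z. Im z \<ge> 0 \<and> z \<noteq> 0} \<subseteq> Sp"
    using assms(3) unfolding admissible_Splus_def by auto
  have oSp: "open Sp" by (rule sector_open[OF sec])
  have memSm: "z \<in> Sm \<longleftrightarrow> cnj z \<in> Sp" for z
  proof
    assume "z \<in> Sm" then obtain w where "w \<in> Sp" "z = cnj w" using assms(4) by blast
    thus "cnj z \<in> Sp" by simp
  next
    assume "cnj z \<in> Sp" hence "cnj (cnj z) \<in> cnj ` Sp" by blast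
    thus "z \<in> Sm" using assms(4) by simp
  qed
  have oSm: "open Sm"
  proof -
    have "Sm = cnj -` Sp" using memSm by auto
    thus ?thesis using oSp by (simp add: continuous_open_vimage continuous_intros)
  qed
  have Up: "{z. Im z > 0} \<subseteq> Sp" using UH by auto
  have Lm: "{z. Im z < 0} \<subseteq> Sm"
  proof
    fix z assume "z \<in> {z. Im z < 0}"
    hence "cnj z \<in> {z. Im z \<ge> 0 \<and> z \<noteq> 0}" by auto
    thus "z \<in> Sm" using UH memSm by auto
  qed
  have nz: "0 \<notin> Sp"
  proof
    assume "0 \<in> Sp"
    then obtain \<alpha> \<beta> r t where "0 = of_real r * cis t" "0 < r" using sec unfolding is_sector_def by blast
    thus False by simp
  qed
  have nzm: "0 \<notin> Sm" using nz memSm by force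
  have p1: "1 \<in> Sp \<inter> Sm" and m1: "-1 \<in> Sp \<inter> Sm" using UH by (auto simp: memSm)
  have oI: "open (Sp \<inter> Sm)" using oSp oSm by auto
  obtain r1 where r1: "r1 > 0" "ball 1 r1 \<subseteq> Sp \<inter> Sm" using oI p1 open_contains_ball by blast
  obtain r2 where r2: "r2 > 0" "ball (-1) r2 \<subseteq> Sp \<inter> Sm" using oI m1 open_contains_ball by blast
  have B1: "ball 1 r1 \<subseteq> connected_component_set (Sp \<inter> Sm) 1"
    by (rule connected_component_maximal) (use r1 in auto)
  have Mn: "monodromyN l = mat 1"
  proof -
    have "exp (- 2 * of_real pi * \<i> * of_nat l) = exp (- (2 * of_real pi * \<i>)) ^ l"
      by (simp add: exp_of_nat_mult[symmetric] mult_ac)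
    also have "exp (- (2 * of_real pi * \<i>)) = (1::complex)"
      by (simp add: exp_minus)
    finally have "exp (- 2 * of_real pi * \<i> * of_nat l) = (1::complex)" by simp
    thus ?thesis by (simp add: monodromyN_def mat2_one)
  qed
  define Wp where "Wp = (\<lambda>w. Hp w ** Fmat l \<mu> w)"
  define Wm where "Wm = (\<lambda>w. Hm w ** Fmat l \<mu> w)"
  define Q where "Q = mat2 (- a) b (- c) a"
  define C0 where "C0 = mat2 1 c0 0 1"
  define C1 where "C1 = mat2 1 0 c1 1"
  have h7: "\<forall>z \<in> connected_component_set (Sp \<inter> Sm) (-1). Wm z = Wp z ** C0"
    using assms(7) by (simp add: Wp_def Wm_def C0_def)
  have h8: "\<forall>z \<in> connected_component_set (Sp \<inter> Sm) 1. Wp z = Wm z ** C1"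
    using assms(8) by (simp add: Wp_def Wm_def C1_def)
  have h9: "\<forall>z \<in> connected_component_set (Sp \<inter> Sm) 1. Wp z = invI l \<mu> Wp z ** Q"
    using assms(9) unfolding Mn by (simp add: Wp_def Q_def)
  define L where "L = {z::complex. Im z < 0}"
  define T where "T = L \<union> ball 1 r1 \<union> ball (-1) r2"
  have oT: "open T" unfolding T_def L_def by (auto intro: open_halfspace_Im_lt)
  have "(0::complex) \<notin> ball 1 r1" using r1(2) nz by blast
  moreover have "(0::complex) \<notin> ball (-1) r2" using r2(2) nz by blast
  ultimately
  have T0: "0 \<notin> T" unfolding T_def L_def by auto
  have TSm: "T \<subseteq> Sm" using Lm r1 r2 unfolding T_def L_def by auto
  have cT: "connected T"
  proof -
    have cL: "connected L" unfolding L_def by (intro convex_connected convex_halfspace_Im_lt)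
    have "Complex 1 (- r1/2) \<in> L \<inter> ball 1 r1"
    proof -
      have "1 - Complex 1 (- r1/2) = Complex 0 (r1/2)" by (simp add: complex_eq_iff)
      thus ?thesis using r1 by (simp add: L_def dist_norm complex_norm)
    qed
    hence c1: "connected (L \<union> ball 1 r1)" by (intro connected_Un[OF cL connected_ball]) auto
    have "Complex (-1) (- r2/2) \<in> (L \<union> ball 1 r1) \<inter> ball (-1) r2"
    proof -
      have "-1 - Complex (-1) (- r2/2) = Complex 0 (r2/2)" by (simp add: complex_eq_iff)
      thus ?thesis using r2 by (simp add: L_def dist_norm complex_norm)
    qed
    hence "connected ((L \<union> ball 1 r1) \<union> ball (-1) r2)" by (intro connected_Un[OF c1 connected_ball]) auto
    thus ?thesis unfolding T_def by simp
  qed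
  have invT: "1 / z \<in> Sp" if z: "z \<in> T" for z
  proof (cases "z \<in> L")
    case True
    hence "Im z < 0" by (simp add: L_def)
    moreover have "(Re z)\<^sup>2 + (Im z)\<^sup>2 > 0" using calculation by (simp add: sum_power2_gt_zero_iff)
    ultimately have "Im (1 / z) > 0" by (simp add: Im_divide divide_pos_pos complex_norm_square) (simp add: divide_neg_pos cmod_power2)
    thus ?thesis using Up by auto
  next
    case False
    hence zS: "z \<in> Sm" using z TSm by auto
    have z0: "z \<noteq> 0" using z T0 by auto
    have "cnj z \<in> Sp" using zS memSm by simp
    hence "of_real (inverse ((norm z)\<^sup>2)) * cnj z \<in> Sp" using z0 by (intro sector_scale[OF sec]) auto
    moreover have "of_real (inverse ((norm z)\<^sup>2)) * cnj z = 1 / z"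
    proof -
      have "of_real ((norm z)\<^sup>2) = z * cnj z" by (rule complex_norm_square)
      thus ?thesis using z0 by (simp add: field_simps of_real_inverse[symmetric])
    qed
    ultimately show ?thesis by simp
  qed
  have hWp: "hmat Sp Wp" unfolding Wp_def by (intro hmat_mult hmat_sub[OF Np] hmat_Fmat nz) auto
  have hWm: "hmat T Wm" unfolding Wm_def by (intro hmat_mult hmat_sub[OF Nm TSm] hmat_Fmat T0)
  have hL: "hmat T (\<lambda>z. invI l \<mu> Wp z ** Q)" by (intro hmat_mult hmat_invI[OF hWp invT T0] hmat_const)
  have hR: "hmat T (\<lambda>z. Wm z ** C1)" by (intro hmat_mult hWm hmat_const)
  have eqm1: "invI l \<mu> Wp (-1) ** Q = Wm (-1) ** C1"
  proof -
    have "(invI l \<mu> Wp (-1) ** Q) $ i $ j = (Wm (-1) ** C1) $ i $ j" for i j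
    proof (rule analytic_continuation_open[of "ball 1 r1" T "\<lambda>z. (invI l \<mu> Wp z ** Q) $ i $ j" "\<lambda>z. (Wm z ** C1) $ i $ j"])
      show "open (ball (1::complex) r1)" "ball (1::complex) r1 \<noteq> {}" using r1 by auto
      show "open T" "connected T" using oT cT by auto
      show "ball 1 r1 \<subseteq> T" unfolding T_def by auto
      show "(\<lambda>z. (invI l \<mu> Wp z ** Q) $ i $ j) holomorphic_on T" using hL by (simp add: hmat_def)
      show "(\<lambda>z. (Wm z ** C1) $ i $ j) holomorphic_on T" using hR by (simp add: hmat_def)
      show "-1 \<in> T" unfolding T_def using r2 by auto
      fix z :: complex assume "z \<in> ball 1 r1"
      hence "z \<in> connected_component_set (Sp \<inter> Sm) 1" using B1 by auto
      hence "invI l \<mu> Wp z ** Q = Wm z ** C1" using h8 h9 by metis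
      thus "(invI l \<mu> Wp z ** Q) $ i $ j = (Wm z ** C1) $ i $ j" by simp
    qed
    thus ?thesis by (simp add: vec_eq_iff)
  qed
  have cm1: "-1 \<in> connected_component_set (Sp \<inter> Sm) (-1)" using m1 by simp
  have c1in: "1 \<in> connected_component_set (Sp \<inter> Sm) 1" using p1 by simp
  have ex1: "expf l \<mu> 1 = 1" by (simp add: expf_def)
  have F1: "Fmat l \<mu> 1 = mat 1" by (simp add: Fmat_def ex1 mat2_one)
  define y1 where "y1 = Hp 1 $ I1 $ I1"
  define y2 where "y2 = Hp 1 $ I1 $ I2"
  define y3 where "y3 = Hp 1 $ I2 $ I1"
  define y4 where "y4 = Hp 1 $ I2 $ I2"
  have Y: "Hp 1 = mat2 y1 y2 y3 y4" unfolding y1_def y2_def y3_def y4_def by (rule mat2_eta)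
  have Ym: "Hm 1 = mat2 (cnj y1) (- cnj y2) (- cnj y3) (cnj y4)"
    using J_unique[OF mu Np Nm Up Lm] unfolding y1_def y2_def y3_def y4_def
    by (subst mat2_eta) simp
  have W1: "Wp 1 = mat2 y1 y2 y3 y4" "Wm 1 = mat2 (cnj y1) (- cnj y2) (- cnj y3) (cnj y4)"
    by (simp_all add: Wp_def Wm_def F1 Y Ym)
  have I1e: "invI l \<mu> Wp 1 = mat2 (\<i> * y3) (\<i> * y4) (- \<i> * y1) (- \<i> * y2)"
    by (subst mat2_eta) (simp add: invI_def ex1 W1)
  have dY: "y1 * y4 - y2 * y3 \<noteq> 0"
  proof -
    have "invertible (Hp 1)" using Np p1 unfolding normalizing_def by auto
    thus ?thesis by (simp add: invertible_det_nz Y mat2_det)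
  qed
  define Z where "Z = mat2 (\<i> * y3) (\<i> * y4) (- \<i> * y1) (- \<i> * y2)"
  have E9: "mat2 y1 y2 y3 y4 = Z ** Q" using h9 c1in W1 I1e by (simp add: Z_def)
  have E8: "mat2 y1 y2 y3 y4 = mat2 (cnj y1) (- cnj y2) (- cnj y3) (cnj y4) ** C1" using h8 c1in W1 by simp
  have dZ: "det Z \<noteq> 0" using dY by (simp add: Z_def mat2_det algebra_simps)
  have detQ: "a^2 - b*c = 1"
  proof -
    have "det (mat2 y1 y2 y3 y4) = det Z * det Q" using E9 by (simp add: det_mul)
    hence "(y1 * y4 - y2 * y3) * (1 - (a^2 - b*c)) = 0"
      by (simp add: Z_def Q_def mat2_det power2_eq_square algebra_simps)
    thus ?thesis using dY by simp
  qed
  define Kc where "Kc = mat2 0 \<i> (- \<i>) 0"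
  define Y' where "Y' = mat2 (cnj y1) (- cnj y2) (- cnj y3) (cnj y4)"
  define Q' where "Q' = mat2 (- cnj a) (- cnj b) (cnj c) (cnj a)"
  define C1i where "C1i = mat2 1 0 (- c1) 1"
  have e9m: "mat2 y1 y2 y3 y4 = mat2 (\<i> * y3 * (- a) + \<i> * y4 * (- c)) (\<i> * y3 * b + \<i> * y4 * a)
      (- \<i> * y1 * (- a) + - \<i> * y2 * (- c)) (- \<i> * y1 * b + - \<i> * y2 * a)"
    using E9 unfolding Z_def Q_def by (simp only: mat2_mult)
  have e9s: "y1 = \<i> * y3 * (- a) + \<i> * y4 * (- c)" "y2 = \<i> * y3 * b + \<i> * y4 * a"
      "y3 = - \<i> * y1 * (- a) + - \<i> * y2 * (- c)" "y4 = - \<i> * y1 * b + - \<i> * y2 * a"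
    using e9m unfolding mat2_eq_iff by blast+
  have f1: "cnj y1 = \<i> * cnj y3 * cnj a + \<i> * cnj y4 * cnj c"
  proof -
    have "cnj y1 = cnj (\<i> * y3 * (- a) + \<i> * y4 * (- c))" by (rule arg_cong[OF e9s(1)])
    also have "\<dots> = \<i> * cnj y3 * cnj a + \<i> * cnj y4 * cnj c" by (simp add: algebra_simps)
    finally show ?thesis .
  qed
  have f2: "cnj y2 = - \<i> * cnj y3 * cnj b - \<i> * cnj y4 * cnj a"
  proof -
    have "cnj y2 = cnj (\<i> * y3 * b + \<i> * y4 * a)" by (rule arg_cong[OF e9s(2)])
    also have "\<dots> = - \<i> * cnj y3 * cnj b - \<i> * cnj y4 * cnj a" by (simp add: algebra_simps)
    finally show ?thesis .
  qed
  have f3: "cnj y3 = - \<i> * cnj y1 * cnj a - \<i> * cnj y2 * cnj c"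
  proof -
    have "cnj y3 = cnj (- \<i> * y1 * (- a) + - \<i> * y2 * (- c))" by (rule arg_cong[OF e9s(3)])
    also have "\<dots> = - \<i> * cnj y1 * cnj a - \<i> * cnj y2 * cnj c" by (simp add: algebra_simps)
    finally show ?thesis .
  qed
  have f4: "cnj y4 = \<i> * cnj y1 * cnj b + \<i> * cnj y2 * cnj a"
  proof -
    have "cnj y4 = cnj (- \<i> * y1 * b + - \<i> * y2 * a)" by (rule arg_cong[OF e9s(4)])
    also have "\<dots> = \<i> * cnj y1 * cnj b + \<i> * cnj y2 * cnj a" by (simp add: algebra_simps)
    finally show ?thesis .
  qed
  have A: "Y' = (Kc ** Y') ** Q'"
    unfolding Y'_def Kc_def Q'_def mat2_mult mat2_eq_iff
  proof (intro conjI)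
    show "cnj y1 = (0 * cnj y1 + \<i> * - cnj y3) * - cnj a + (0 * - cnj y2 + \<i> * cnj y4) * cnj c"
      unfolding f1 by (simp add: algebra_simps)
    show "- cnj y2 = (0 * cnj y1 + \<i> * - cnj y3) * - cnj b + (0 * - cnj y2 + \<i> * cnj y4) * cnj a"
      unfolding f2 by (simp add: algebra_simps)
    show "- cnj y3 = (- \<i> * cnj y1 + 0 * - cnj y3) * - cnj a + (- \<i> * - cnj y2 + 0 * cnj y4) * cnj c"
      unfolding f3 by (simp add: algebra_simps)
    show "cnj y4 = (- \<i> * cnj y1 + 0 * - cnj y3) * - cnj b + (- \<i> * - cnj y2 + 0 * cnj y4) * cnj a"
      unfolding f4 by (simp add: algebra_simps)
  qed
  have Y'e: "Y' = mat2 y1 y2 y3 y4 ** C1i"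
  proof -
    have "mat2 y1 y2 y3 y4 ** C1i = Y' ** (C1 ** C1i)" using E8 by (simp add: Y'_def matrix_mul_assoc)
    also have "C1 ** C1i = mat 1" by (simp add: C1_def C1i_def mat2_mult mat2_one)
    finally show ?thesis by simp
  qed
  have KY: "Kc ** mat2 y1 y2 y3 y4 = Z" by (simp add: Kc_def Z_def mat2_mult)
  have "Z ** Q = Z ** (C1i ** Q' ** C1)"
  proof -
    have "Z ** Q = Y' ** C1" using E9 E8 by (simp add: Y'_def)
    also have "\<dots> = ((Kc ** (mat2 y1 y2 y3 y4 ** C1i)) ** Q') ** C1" using A Y'e by metis
    also have "\<dots> = Z ** (C1i ** Q' ** C1)" by (simp add: matrix_mul_assoc KY)
    finally show ?thesis .
  qed
  hence Qeq: "Q = C1i ** Q' ** C1" by (rule cancel_left[OF dZ])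
  have r22: "(C1i ** Q' ** C1) $ I2 $ I2 = c1 * cnj b + cnj a"
    by (simp add: C1i_def Q'_def C1_def mat2_mult algebra_simps)
  have r12: "(C1i ** Q' ** C1) $ I1 $ I2 = - cnj b"
    by (simp add: C1i_def Q'_def C1_def mat2_mult algebra_simps)
  have ha: "a = c1 * cnj b + cnj a" using arg_cong[OF Qeq, of "\<lambda>M. M $ I2 $ I2"] r22 by (simp add: Q_def)
  have hb: "b = - cnj b" using arg_cong[OF Qeq, of "\<lambda>M. M $ I1 $ I2"] r12 by (simp add: Q_def)
  have hb': "cnj b = - b" using hb by (metis minus_minus)
  have "c1*b + a = c1*b + (c1 * cnj b + cnj a)" using arg_cong[OF ha, of "\<lambda>x. c1*b + x"] .
  also have "\<dots> = cnj a" unfolding hb' by (simp add: algebra_simps)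
  finally have reQ: "c1 * b + a = cnj a" .
  define X where "X = Wp (-1)"
  define x1 where "x1 = X $ I1 $ I1"
  define x2 where "x2 = X $ I1 $ I2"
  define x3 where "x3 = X $ I2 $ I1"
  define x4 where "x4 = X $ I2 $ I2"
  define s where "s = expf l \<mu> (-1)"
  have X: "X = mat2 x1 x2 x3 x4" unfolding x1_def x2_def x3_def x4_def by (rule mat2_eta)
  have dX: "x1 * x4 - x2 * x3 \<noteq> 0"
  proof -
    have "invertible (Hp (-1))" using Np m1 unfolding normalizing_def by auto
    hence "det (Hp (-1)) \<noteq> 0" by (simp add: invertible_det_nz)
    moreover have "det (Fmat l \<mu> (-1)) \<noteq> 0" by (simp add: Fmat_def mat2_det expf_nz)
    ultimately have "det X \<noteq> 0" by (simp add: X_def Wp_def det_mul)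
    thus ?thesis by (simp add: X mat2_det)
  qed
  have Im1: "invI l \<mu> Wp (-1) = mat2 (s * \<i> * x3) (s * \<i> * x4) (- s * \<i> * x1) (- s * \<i> * x2)"
    by (subst mat2_eta) (simp add: invI_def s_def x1_def x2_def x3_def x4_def X_def mult_ac)
  have "Q ** Q = mat2 (a^2 - b*c) 0 0 (a^2 - b*c)" by (simp add: Q_def mat2_mult power2_eq_square algebra_simps)
  hence QQ: "Q ** Q = mat 1" unfolding detQ by (simp add: mat2_one)
  have "X ** (C0 ** C1 ** Q) = invI l \<mu> Wp (-1)"
  proof -
    have "X ** (C0 ** C1 ** Q) = (Wm (-1) ** C1) ** Q" using h7 cm1 by (simp add: X_def matrix_mul_assoc)
    also have "\<dots> = invI l \<mu> Wp (-1) ** (Q ** Q)" using eqm1 by (simp add: matrix_mul_assoc)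
    finally show ?thesis by (simp add: QQ)
  qed
  hence "mat2 x1 x2 x3 x4 ** mat2 (- (1 + c0*c1) * a - c0 * c) ((1 + c0*c1) * b + c0 * a) (- c1 * a - c) (c1 * b + a)
        = mat2 (s * \<i> * x3) (s * \<i> * x4) (- s * \<i> * x1) (- s * \<i> * x2)"
  proof -
    have "C0 ** C1 ** Q = mat2 (- (1 + c0*c1) * a - c0 * c) ((1 + c0*c1) * b + c0 * a) (- c1 * a - c) (c1 * b + a)"
      by (simp add: C0_def C1_def Q_def mat2_mult mat2_eq_iff algebra_simps)
    thus ?thesis using \<open>X ** (C0 ** C1 ** Q) = invI l \<mu> Wp (-1)\<close> unfolding Im1 X by simp
  qed
  hence "(- (1 + c0*c1) * a - c0 * c) + (c1 * b + a) = 0"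
    unfolding mat2_mult mat2_eq_iff by (intro trace0[OF _ _ _ _ dX]) blast+
  hence tr: "- c0*c1*a - c0*c + c1*b = 0" by (simp add: algebra_simps)
  show ?thesis by (rule final_alg[OF detQ tr reQ assms(10)])
qed

end
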